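(* For every integer $n\geq2$, the $V^{n}$-move is not an unknotting operation on welded knots; that is, there is a welded knot (for instance the trefoil knot) which is not $V^{n}$-equivalent to the unknot.
   Context: A virtual link diagram is the image of an immersion of finitely many ordered, oriented circles in the plane with transverse double points, each a classical crossing (with over/under information) or a virtual crossing. Welded Reidemeister moves are R1–R3, the virtual moves VR1–VR4, and the OC move (a strand passing over two strands at classical crossings may slide across a virtual crossing of those two strands); a welded knot is an equivalence class of one-component diagrams under these moves. The $V^{n}$-move: inside a disk the diagram consists of two arcs $a,b$ oriented in the same direction; on one side they are parallel without crossings; on the other side the tangle is the $2$-braid word $(\sigma\tau)^{n}$, where $\sigma$ is a classical crossing with $b$ over $a$ and $\tau$ a virtual crossing (so $n$ classical crossings, all with $b$ over and of the same sign, alternating with $n$ virtual crossings). Two welded knots are $V^{n}$-equivalent if diagrams are related by $V^n$-moves and welded Reidemeister moves. A local move is an unknotting operation on welded knots if every welded knot is equivalent to the unknot under that move and welded Reidemeister moves. *)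

theory Defs
  imports Main "HOL-Library.Multiset"
begin

text \<open>A one-component virtual knot diagram modulo the virtual moves VR1--VR4 is
encoded by its (signed) Gauss code: reading along the oriented circle from a base
point, each classical crossing is met twice, once as over-passage (O) and once as
under-passage (U); each letter carries the crossing label and the crossing sign
(True = positive).  Virtual crossings leave no trace.  Rotation of the word
(changing the base point) and renaming labels are identities of diagrams.\<close>

datatype letter = Over nat bool | Under nat bool

fun lbl :: "letter \<Rightarrow> nat" where
  "lbl (Over c e) = c" | "lbl (Under c e) = c"

definition labels :: "letter list \<Rightarrow> nat set" where
  "labels xs = lbl ` set xs"

fun relabel :: "(nat \<Rightarrow> nat) \<Rightarrow> letter \<Rightarrow> letter" where
  "relabel f (Over c e) = Over (f c) e" | "relabel f (Under c e) = Under (f c) e"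

definition gauss_wf :: "letter list \<Rightarrow> bool" where
  "gauss_wf K \<longleftrightarrow> (\<forall>c \<in> labels K.
      length (filter (\<lambda>l. \<exists>e. l = Over c e) K) = 1 \<and>
      length (filter (\<lambda>l. \<exists>e. l = Under c e) K) = 1 \<and>
      (\<forall>e e'. Over c e \<in> set K \<longrightarrow> Under c e' \<in> set K \<longrightarrow> e = e'))"

text \<open>Inserting the contents of two disjoint small arcs of the circle (given in
either order along the knot; the arcs may lie in the same gap).\<close>
definition ins2 :: "letter list \<Rightarrow> letter list \<Rightarrow> letter list \<Rightarrow> letter list \<Rightarrow> bool" where
  "ins2 xs s1 s2 ys \<longleftrightarrow> (\<exists>u v w. xs = u @ v @ w \<and>
      (ys = u @ s1 @ v @ s2 @ w \<or> ys = u @ s2 @ v @ s1 @ w))"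

definition rot_step :: "letter list \<Rightarrow> letter list \<Rightarrow> bool" where
  "rot_step xs ys \<longleftrightarrow> ys = rotate1 xs"

definition relabel_step :: "letter list \<Rightarrow> letter list \<Rightarrow> bool" where
  "relabel_step xs ys \<longleftrightarrow> (\<exists>f. inj f \<and> ys = map (relabel f) xs)"

text \<open>R1: creation of a kink (a crossing whose two passages are adjacent), any
order, any sign.\<close>
definition R1_step :: "letter list \<Rightarrow> letter list \<Rightarrow> bool" where
  "R1_step xs ys \<longleftrightarrow> (\<exists>u v c e. xs = u @ v \<and> c \<notin> labels xs \<and>
      (ys = u @ [Over c e, Under c e] @ v \<or> ys = u @ [Under c e, Over c e] @ v))"

text \<open>R2: one arc passes over another twice, creating two crossings of opposite
signs; the two strands may be parallel or antiparallel.\<close>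
definition R2_step :: "letter list \<Rightarrow> letter list \<Rightarrow> bool" where
  "R2_step xs ys \<longleftrightarrow> (\<exists>c1 c2 e. c1 \<noteq> c2 \<and> c1 \<notin> labels xs \<and> c2 \<notin> labels xs \<and>
      (ins2 xs [Over c1 e, Over c2 (\<not> e)] [Under c1 e, Under c2 (\<not> e)] ys \<or>
       ins2 xs [Over c1 e, Over c2 (\<not> e)] [Under c2 (\<not> e), Under c1 e] ys))"

text \<open>R3: three strands T (top), M (middle), B (bottom) pairwise crossing in a
triangle, with crossings x = T over M, y = T over B, z = M over B.  The segments read
T: {Over x, Over y}, M: {Under x, Over z}, B: {Under y, Under z}; the move reverses the order on each of
the three segments.  The orders realised by an actual triangle of oriented strands are
exactly those with  (order on T = order on M) iff sign y = sign z  and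
(order on T = order on B) iff sign x = sign z  (all 16 configurations).\<close>
definition R3_step :: "letter list \<Rightarrow> letter list \<Rightarrow> bool" where
  "R3_step xs ys \<longleftrightarrow> (\<exists>x y z ex ey ez t m b.
      x \<noteq> y \<and> x \<noteq> z \<and> y \<noteq> z \<and>
      (t = m \<longleftrightarrow> ey = ez) \<and> (t = b \<longleftrightarrow> ex = ez) \<and>
      (let T = (if t then [Over x ex, Over y ey] else [Over y ey, Over x ex]);
           M = (if m then [Under x ex, Over z ez] else [Over z ez, Under x ex]);
           B = (if b then [Under y ey, Under z ez] else [Under z ez, Under y ey])
       in \<exists>u v w r p1 p2 p3. {#p1, p2, p3#} = {#T, M, B#} \<and>
            xs = u @ p1 @ v @ p2 @ w @ p3 @ r \<and>
            ys = u @ rev p1 @ v @ rev p2 @ w @ rev p3 @ r))"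

text \<open>OC (forbidden-move-free welded move): two consecutive over-passages of a strand
may be exchanged.\<close>
definition OC_step :: "letter list \<Rightarrow> letter list \<Rightarrow> bool" where
  "OC_step xs ys \<longleftrightarrow> (\<exists>u v c1 e1 c2 e2.
      xs = u @ [Over c1 e1, Over c2 e2] @ v \<and> ys = u @ [Over c2 e2, Over c1 e1] @ v)"

definition welded_step :: "letter list \<Rightarrow> letter list \<Rightarrow> bool" where
  "welded_step xs ys \<longleftrightarrow> rot_step xs ys \<or> relabel_step xs ys \<or> R1_step xs ys \<or>
      R2_step xs ys \<or> R3_step xs ys \<or> OC_step xs ys"

text \<open>The V^n-move: arcs a, b parallel become the tangle (sigma tau)^n; along a one
meets the under-passages of crossings c1..cn, along b their over-passages, in the same
order, all of one sign e.\<close>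
definition Vn_move :: "nat \<Rightarrow> letter list \<Rightarrow> letter list \<Rightarrow> bool" where
  "Vn_move n xs ys \<longleftrightarrow> (\<exists>cs e. length cs = n \<and> distinct cs \<and> set cs \<inter> labels xs = {} \<and>
      ins2 xs (map (\<lambda>c. Under c e) cs) (map (\<lambda>c. Over c e) cs) ys)"

definition equiv_under :: "(letter list \<Rightarrow> letter list \<Rightarrow> bool) \<Rightarrow> letter list \<Rightarrow> letter list \<Rightarrow> bool" where
  "equiv_under M = (symclp (\<lambda>xs ys. welded_step xs ys \<or> M xs ys))\<^sup>*\<^sup>*"

definition Vn_equivalent :: "nat \<Rightarrow> letter list \<Rightarrow> letter list \<Rightarrow> bool" where
  "Vn_equivalent n = equiv_under (Vn_move n)"

definition unknot :: "letter list" where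
  "unknot = []"

definition is_unknotting_operation :: "(letter list \<Rightarrow> letter list \<Rightarrow> bool) \<Rightarrow> bool" where
  "is_unknotting_operation M \<longleftrightarrow> (\<forall>K. gauss_wf K \<longrightarrow> equiv_under M K unknot)"

definition trefoil :: "letter list" where
  "trefoil = [Over 1 True, Under 2 True, Over 3 True, Under 1 True, Over 2 True, Under 3 True]"

end

theory Submission
  imports Defs "HOL-Number_Theory.Cong"
begin

definition om :: "int \<times> int \<Rightarrow> int \<times> int \<Rightarrow> int" where
  "om a b = fst a * snd b - snd a * fst b"
definition qop :: "bool \<Rightarrow> int \<times> int \<Rightarrow> int \<times> int \<Rightarrow> int \<times> int" where
  "qop e a b = (let k = (if e then om a b else - om a b) in (fst a + k * fst b, snd a + k * snd b))"
definition sim :: "int \<Rightarrow> int \<times> int \<Rightarrow> int \<times> int \<Rightarrow> bool" where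
  "sim n a b \<longleftrightarrow> ([fst a = fst b] (mod n) \<and> [snd a = snd b] (mod n)) \<or>
                   ([fst a = - fst b] (mod n) \<and> [snd a = - snd b] (mod n))"

lemma sim_refl[simp]: "sim n a a" by (simp add: sim_def)
lemma neg_swap: "[a = - b] (mod n) \<Longrightarrow> [b = - (a::int)] (mod n)"
proof -
  assume h: "[a = - b] (mod n)"
  have "[- a = - (- b)] (mod n)" using h cong_minus_minus_iff by blast
  then show ?thesis by (simp add: cong_sym)
qed
lemma neg_trans1: "[a = b] (mod n) \<Longrightarrow> [b = - c] (mod n) \<Longrightarrow> [a = - (c::int)] (mod n)"
  by (rule cong_trans)
lemma neg_trans2: "[a = - b] (mod n) \<Longrightarrow> [b = c] (mod n) \<Longrightarrow> [a = - (c::int)] (mod n)"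
proof -
  assume h: "[a = - b] (mod n)" "[b = c] (mod n)"
  have "[- b = - c] (mod n)" using h(2) cong_minus_minus_iff by blast
  then show ?thesis using h(1) by (rule cong_trans[rotated])
qed
lemma neg_trans3: "[a = - b] (mod n) \<Longrightarrow> [b = - c] (mod n) \<Longrightarrow> [a = (c::int)] (mod n)"
proof -
  assume h: "[a = - b] (mod n)" "[b = - c] (mod n)"
  have "[- b = - (- c)] (mod n)" using h(2) cong_minus_minus_iff by blast
  then show ?thesis using h(1) by (simp add: cong_trans)
qed

lemma sim_sym: "sim n a b \<Longrightarrow> sim n b a"
  unfolding sim_def
  apply (elim disjE conjE)
   apply (rule disjI1, rule conjI, erule cong_sym, erule cong_sym)
  apply (rule disjI2, rule conjI, erule neg_swap, erule neg_swap)
  done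
lemma sim_trans: "sim n a b \<Longrightarrow> sim n b c \<Longrightarrow> sim n a c"
  unfolding sim_def
  apply (elim disjE conjE)
     apply (rule disjI1, rule conjI, erule (1) cong_trans, erule (1) cong_trans)
    apply (rule disjI2, rule conjI, erule (1) neg_trans1, erule (1) neg_trans1)
   apply (rule disjI2, rule conjI, erule (1) neg_trans2, erule (1) neg_trans2)
  apply (rule disjI1, rule conjI, erule (1) neg_trans3, erule (1) neg_trans3)
  done

lemma qop_idem[simp]: "qop e a a = a" by (simp add: qop_def om_def Let_def)
lemma om_qop: "om (qop e a b) b = om a b"
  by (simp add: qop_def om_def Let_def algebra_simps)
lemma qop_inv[simp]: "qop (\<not> e) (qop e a b) b = a"
  by (cases e) (simp_all add: qop_def om_def Let_def algebra_simps)
lemma qop_inv'[simp]: "qop e (qop (\<not> e) a b) b = a"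
  using qop_inv[of "\<not> e" a b] by simp
lemma qop_dist: "qop f (qop e a b) c = qop e (qop f a c) (qop f b c)"
  by (cases e; cases f) (simp_all add: qop_def om_def Let_def algebra_simps)

lemma qop_comp: "qop e (a1,a2) (b1,b2) = (a1 + (if e then 1 else -1) * (a1*b2 - a2*b1) * b1,
   a2 + (if e then 1 else -1) * (a1*b2 - a2*b1) * b2)"
  by (simp add: qop_def om_def Let_def)

lemma qop_sim1: assumes "sim n a a'" shows "sim n (qop e a b) (qop e a' b)"
proof -
  obtain a1 a2 b1 b2 a1' a2' where P: "a = (a1,a2)" "b = (b1,b2)" "a' = (a1',a2')" by (metis surj_pair)
  define s :: int where "s = (if e then 1 else -1)"
  from assms consider "[a1 = a1'] (mod n)" "[a2 = a2'] (mod n)" | "[a1 = - a1'] (mod n)" "[a2 = - a2'] (mod n)"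
    unfolding sim_def P by auto
  then show ?thesis
  proof cases
    case 1
    then show ?thesis unfolding sim_def P qop_comp s_def[symmetric]
      by (intro disjI1 conjI; simp; intro cong_add cong_mult cong_diff cong_refl; simp)
  next
    case 2
    have "- (a1' + s * (a1' * b2 - a2' * b1) * b1) = (-a1') + s * ((-a1') * b2 - (-a2') * b1) * b1"
         "- (a2' + s * (a1' * b2 - a2' * b1) * b2) = (-a2') + s * ((-a1') * b2 - (-a2') * b1) * b2"
      by (simp_all add: algebra_simps)
    then show ?thesis using 2 unfolding sim_def P qop_comp s_def[symmetric]
      by (intro disjI2 conjI; simp only: fst_conv snd_conv; intro cong_add cong_mult cong_diff cong_refl; simp)
  qed
qed

lemma qop_sim2: assumes "sim n b b'" shows "sim n (qop e a b) (qop e a b')"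
proof -
  obtain a1 a2 b1 b2 b1' b2' where P: "a = (a1,a2)" "b = (b1,b2)" "b' = (b1',b2')" by (metis surj_pair)
  define s :: int where "s = (if e then 1 else -1)"
  from assms consider "[b1 = b1'] (mod n)" "[b2 = b2'] (mod n)" | "[b1 = - b1'] (mod n)" "[b2 = - b2'] (mod n)"
    unfolding sim_def P by auto
  then show ?thesis
  proof cases
    case 1
    then show ?thesis unfolding sim_def P qop_comp s_def[symmetric]
      by (intro disjI1 conjI; simp; intro cong_add cong_mult cong_diff cong_refl; simp)
  next
    case 2
    have "a1 + s * (a1 * b2' - a2 * b1') * b1' = a1 + s * (a1 * (-b2') - a2 * (-b1')) * (-b1')"
         "a2 + s * (a1 * b2' - a2 * b1') * b2' = a2 + s * (a1 * (-b2') - a2 * (-b1')) * (-b2')"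
      by (simp_all add: algebra_simps)
    then show ?thesis using 2 unfolding sim_def P qop_comp s_def[symmetric]
      by (intro disjI1 conjI; simp only: fst_conv snd_conv; intro cong_add cong_mult cong_diff cong_refl; simp)
  qed
qed

fun stp :: "int \<Rightarrow> (nat \<Rightarrow> int \<times> int) \<Rightarrow> letter \<Rightarrow> int \<times> int \<Rightarrow> (int \<times> int) option" where
  "stp n g (Over c e) x = (if sim n x (g c) then Some x else None)"
| "stp n g (Under c e) x = Some (qop e x (g c))"

fun run :: "int \<Rightarrow> (nat \<Rightarrow> int \<times> int) \<Rightarrow> int \<times> int \<Rightarrow> letter list \<Rightarrow> (int \<times> int) option" where
  "run n g x [] = Some x"
| "run n g x (l # w) = (case stp n g l x of None \<Rightarrow> None | Some y \<Rightarrow> run n g y w)"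

lemma run_Over[simp]: "run n g x (Over c e # w) = (if sim n x (g c) then run n g x w else None)"
  by simp
lemma run_Under[simp]: "run n g x (Under c e # w) = run n g (qop e x (g c)) w"
  by simp
declare run.simps(2)[simp del]
lemma run_Over_Some[simp]: "run n g x (Over c e # w) = Some y \<longleftrightarrow> sim n x (g c) \<and> run n g x w = Some y"
  by simp

lemma run_append_Some: "run n g x (a @ b) = Some y \<longleftrightarrow> (\<exists>m. run n g x a = Some m \<and> run n g m b = Some y)"
proof (induction a arbitrary: x)
  case Nil then show ?case by simp
next
  case (Cons l a) then show ?case by (cases l) auto
qed

lemma labels_simps[simp]: "labels [] = {}" "labels (l # w) = insert (lbl l) (labels w)"
  "labels (a @ b) = labels a \<union> labels b"
  by (auto simp: labels_def)

lemma run_cong_g: "(\<forall>c\<in>labels w. g c = g' c) \<Longrightarrow> run n g x w = run n g' x w"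
proof (induction w arbitrary: x)
  case Nil then show ?case by simp
next
  case (Cons l w) then show ?case by (cases l) auto
qed

lemma run_sim: "run n g x w = Some y \<Longrightarrow> sim n x x' \<Longrightarrow> \<exists>y'. run n g x' w = Some y' \<and> sim n y y'"
proof (induction w arbitrary: x x')
  case Nil then show ?case by simp
next
  case (Cons l w)
  show ?case
  proof (cases l)
    case (Over c e)
    with Cons.prems have "sim n x (g c)" "run n g x w = Some y" by (auto split: if_splits)
    moreover have "sim n x' (g c)" using calculation(1) Cons.prems(2) sim_sym sim_trans by blast
    ultimately show ?thesis using Cons.IH[of x x'] Cons.prems(2) Over by simp
  next
    case (Under c e)
    with Cons show ?thesis by (simp add: qop_sim1)
  qed
qed

lemma run_const: "\<forall>c\<in>labels w. sim n (g c) y \<Longrightarrow> sim n x y \<Longrightarrow> \<exists>x'. run n g x w = Some x' \<and> sim n x' y"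
proof (induction w arbitrary: x)
  case Nil then show ?case by simp
next
  case (Cons l w)
  show ?case
  proof (cases l)
    case (Over c e)
    have "sim n (g c) y" using Cons.prems Over by simp
    then have "sim n x (g c)" using Cons.prems(2) by (metis sim_sym sim_trans)
    then show ?thesis using Cons Over by simp
  next
    case (Under c e)
    have "sim n (qop e x (g c)) (qop e y (g c))" using Cons by (intro qop_sim1) auto
    moreover have "sim n (qop e y (g c)) (qop e y y)" using Cons Under by (intro qop_sim2) auto
    ultimately have "sim n (qop e x (g c)) y" by (metis sim_trans qop_idem)
    with Cons Under show ?thesis by auto
  qed
qed

lemma run_overs: "\<forall>l\<in>set os. \<exists>c e. l = Over c e \<Longrightarrow> run n g x os = Some y \<Longrightarrow> y = x \<and> (\<forall>c\<in>labels os. sim n x (g c))"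
proof (induction os arbitrary: x)
  case Nil then show ?case by simp
next
  case (Cons l w)
  then obtain c e where l: "l = Over c e" by auto
  with Cons.prems have 1: "sim n x (g c)" "run n g x w = Some y" by (auto split: if_splits)
  have 2: "\<forall>l\<in>set w. \<exists>c e. l = Over c e" using Cons.prems by simp
  from Cons.IH[OF 2 1(2)] 1(1) l show ?case by simp
qed

lemma run_overs2: "\<forall>l\<in>set os. \<exists>c e. l = Over c e \<Longrightarrow> \<forall>c\<in>labels os. sim n x (g c) \<Longrightarrow> run n g x os = Some x"
proof (induction os arbitrary: x)
  case Nil then show ?case by simp
next
  case (Cons l w)
  then obtain c e where l: "l = Over c e" by auto
  have 2: "\<forall>l\<in>set w. \<exists>c e. l = Over c e" using Cons.prems by simp
  have 3: "\<forall>c\<in>labels w. sim n x (g c)" using Cons.prems by simp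
  have 4: "sim n x (g c)" using Cons.prems l by simp
  from Cons.IH[OF 2 3] 4 l show ?case by simp
qed

declare run_Over[simp del]

definition colored :: "int \<Rightarrow> (nat \<Rightarrow> int \<times> int) \<Rightarrow> int \<times> int \<Rightarrow> letter list \<Rightarrow> bool" where
  "colored n g x w \<longleftrightarrow> (\<exists>y. run n g x w = Some y \<and> sim n y x)"

definition Inv :: "int \<Rightarrow> letter list \<Rightarrow> bool" where
  "Inv n w \<longleftrightarrow> gauss_wf w \<and> (\<exists>g x. colored n g x w \<and> (\<exists>c\<in>labels w. \<not> sim n (g c) x))"

definition wfc :: "letter list \<Rightarrow> nat \<Rightarrow> bool" where
  "wfc K c \<longleftrightarrow> length (filter (\<lambda>l. \<exists>e. l = Over c e) K) = 1 \<and>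
      length (filter (\<lambda>l. \<exists>e. l = Under c e) K) = 1 \<and>
      (\<forall>e e'. Over c e \<in> set K \<longrightarrow> Under c e' \<in> set K \<longrightarrow> e = e')"

lemma wf_wfc: "gauss_wf K \<longleftrightarrow> (\<forall>c\<in>labels K. wfc K c)"
  by (simp add: gauss_wf_def wfc_def)

lemma wfc_mset: "mset xs = mset ys \<Longrightarrow> wfc xs c = wfc ys c"
proof -
  assume h: "mset xs = mset ys"
  have "length (filter P xs) = length (filter P ys)" for P
    by (metis h mset_filter size_mset)
  moreover have "set xs = set ys" using h by (metis set_mset_mset)
  ultimately show ?thesis unfolding wfc_def by simp
qed

lemma labels_mset: "mset xs = mset ys \<Longrightarrow> labels xs = labels ys"
  unfolding labels_def by (metis set_mset_mset)

lemma wf_mset: "mset xs = mset ys \<Longrightarrow> gauss_wf xs = gauss_wf ys"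
  unfolding wf_wfc using wfc_mset labels_mset by metis

lemma filt_nil_O: "c \<notin> labels B \<Longrightarrow> filter (\<lambda>l. \<exists>e. l = Over c e) B = []"
  by (auto simp: filter_empty_conv labels_def) (metis image_eqI lbl.simps(1))
lemma filt_nil_U: "c \<notin> labels B \<Longrightarrow> filter (\<lambda>l. \<exists>e. l = Under c e) B = []"
  by (auto simp: filter_empty_conv labels_def) (metis image_eqI lbl.simps(2))
lemma notin_O: "c \<notin> labels B \<Longrightarrow> Over c e \<notin> set B"
  by (auto simp: labels_def) (metis image_eqI lbl.simps(1))
lemma notin_U: "c \<notin> labels B \<Longrightarrow> Under c e \<notin> set B"
  by (auto simp: labels_def) (metis image_eqI lbl.simps(2))

lemma wfc_app1: "c \<notin> labels B \<Longrightarrow> wfc (A @ B) c = wfc A c"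
  unfolding wfc_def using filt_nil_O[of c B] filt_nil_U[of c B] notin_O[of c B] notin_U[of c B]
  by auto
lemma wfc_app2: "c \<notin> labels A \<Longrightarrow> wfc (A @ B) c = wfc B c"
  unfolding wfc_def using filt_nil_O[of c A] filt_nil_U[of c A] notin_O[of c A] notin_U[of c A]
  by auto

lemma wf_app: "labels A \<inter> labels B = {} \<Longrightarrow> gauss_wf (A @ B) = (gauss_wf A \<and> gauss_wf B)"
proof -
  assume h: "labels A \<inter> labels B = {}"
  have a: "c \<in> labels A \<Longrightarrow> wfc (A @ B) c = wfc A c" for c using h wfc_app1[of c B A] by blast
  have b: "c \<in> labels B \<Longrightarrow> wfc (A @ B) c = wfc B c" for c using h wfc_app2[of c A B] by blast
  show ?thesis unfolding wf_wfc labels_simps using a b by blast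
qed

lemma relabel_lbl: "lbl (relabel f l) = f (lbl l)" by (cases l) auto

lemma labels_relabel: "labels (map (relabel f) xs) = f ` labels xs"
  by (auto simp: labels_def relabel_lbl image_image)

lemma relabel_Over: "inj f \<Longrightarrow> (relabel f l = Over (f c) e) = (l = Over c e)"
  by (cases l) (auto dest: injD)
lemma relabel_Under: "inj f \<Longrightarrow> (relabel f l = Under (f c) e) = (l = Under c e)"
  by (cases l) (auto dest: injD)

lemma wfc_relabel: "inj f \<Longrightarrow> wfc (map (relabel f) xs) (f c) = wfc xs c"
proof -
  assume f: "inj f"
  have 1: "filter (\<lambda>l. \<exists>e. l = Over (f c) e) (map (relabel f) xs) = map (relabel f) (filter (\<lambda>l. \<exists>e. l = Over c e) xs)"
    by (simp add: filter_map o_def relabel_Over[OF f])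
  have 2: "filter (\<lambda>l. \<exists>e. l = Under (f c) e) (map (relabel f) xs) = map (relabel f) (filter (\<lambda>l. \<exists>e. l = Under c e) xs)"
    by (simp add: filter_map o_def relabel_Under[OF f])
  have 3: "Over (f c) e \<in> set (map (relabel f) xs) = (Over c e \<in> set xs)" for e
  proof -
    have "Over (f c) e \<in> set (map (relabel f) xs) \<longleftrightarrow> (\<exists>l\<in>set xs. relabel f l = Over (f c) e)"
      by (metis (no_types, lifting) image_iff set_map)
    also have "\<dots> \<longleftrightarrow> Over c e \<in> set xs" by (simp add: relabel_Over[OF f])
    finally show ?thesis .
  qed
  have 4: "Under (f c) e \<in> set (map (relabel f) xs) = (Under c e \<in> set xs)" for e
  proof -
    have "Under (f c) e \<in> set (map (relabel f) xs) \<longleftrightarrow> (\<exists>l\<in>set xs. relabel f l = Under (f c) e)"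
      by (metis (no_types, lifting) image_iff set_map)
    also have "\<dots> \<longleftrightarrow> Under c e \<in> set xs" by (simp add: relabel_Under[OF f])
    finally show ?thesis .
  qed
  show ?thesis unfolding wfc_def 1 2 3 4 by simp
qed

lemma wf_relabel: "inj f \<Longrightarrow> gauss_wf (map (relabel f) xs) = gauss_wf xs"
  unfolding wf_wfc labels_relabel using wfc_relabel by auto

lemma run_append: "run n g x (a @ b) = Option.bind (run n g x a) (\<lambda>m. run n g m b)"
proof (induction a arbitrary: x)
  case Nil then show ?case by simp
next
  case (Cons l a) then show ?case by (cases l) (auto simp: run_Over)
qed

lemma Inv_I: "gauss_wf w \<Longrightarrow> run n g x w = Some y \<Longrightarrow> sim n y x \<Longrightarrow> c \<in> labels w \<Longrightarrow> \<not> sim n (g c) x \<Longrightarrow> Inv n w"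
  unfolding Inv_def colored_def by blast

lemma Inv_E: assumes "Inv n w"
  obtains g x y c where "gauss_wf w" "run n g x w = Some y" "sim n y x" "c \<in> labels w" "\<not> sim n (g c) x"
  using assms unfolding Inv_def colored_def by blast

lemma OC_sym: "OC_step xs ys \<Longrightarrow> OC_step ys xs"
  unfolding OC_step_def by blast

lemma OC_fwd: assumes "OC_step xs ys" "Inv n xs" shows "Inv n ys"
proof -
  obtain u v c1 e1 c2 e2 where xs: "xs = u @ [Over c1 e1, Over c2 e2] @ v"
    and ys: "ys = u @ [Over c2 e2, Over c1 e1] @ v" using assms(1) unfolding OC_step_def by blast
  have ms: "mset xs = mset ys" unfolding xs ys by simp
  have sw: "run n g m (Over c1 e1 # Over c2 e2 # v) = run n g m (Over c2 e2 # Over c1 e1 # v)" for g m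
    by (simp add: conj_commute run_Over)
  have xs': "xs = u @ (Over c1 e1 # Over c2 e2 # v)" and ys': "ys = u @ (Over c2 e2 # Over c1 e1 # v)"
    using xs ys by simp_all
  have r: "run n g x xs = run n g x ys" for g x
    unfolding xs' ys' run_append by (simp only: sw)
  from assms(2) obtain g x y c where "gauss_wf xs" "run n g x xs = Some y" "sim n y x" "c \<in> labels xs" "\<not> sim n (g c) x"
    by (rule Inv_E)
  then show ?thesis using wf_mset[OF ms] labels_mset[OF ms] r by (intro Inv_I[of ys n g x y c]) auto
qed

lemma rot_fwd: assumes "Inv n xs" shows "Inv n (rotate1 xs)"
proof (cases xs)
  case Nil then show ?thesis using assms by simp
next
  case (Cons l w)
  have ms: "mset (rotate1 xs) = mset xs" using Cons by simp
  from assms obtain g x0 y c where wf: "gauss_wf xs" and r: "run n g x0 xs = Some y" and s: "sim n y x0"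
    and c: "c \<in> labels xs" "\<not> sim n (g c) x0" by (rule Inv_E)
  from r Cons obtain x1 where s1: "run n g x0 [l] = Some x1" and s2: "run n g x1 w = Some y"
    using run_append_Some[of n g x0 "[l]" w y] by auto
  obtain x1' where s3: "run n g y [l] = Some x1'" "sim n x1 x1'" using run_sim[OF s1 sim_sym[OF s]] by blast
  have rr: "run n g x1 (rotate1 xs) = Some x1'" using Cons s2 s3 run_append_Some[of n g x1 w "[l]"] by auto
  have nt: "\<exists>c\<in>labels (rotate1 xs). \<not> sim n (g c) x1"
  proof (rule ccontr)
    assume "\<not> ?thesis"
    then have all: "\<forall>c\<in>labels (rotate1 xs). sim n (g c) x1" by blast
    then have "\<forall>c\<in>labels w. sim n (g c) x1" using Cons by simp
    from run_const[OF this sim_refl] s2 have "sim n y x1" by auto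
    then have "sim n x0 x1" using s by (metis sim_sym sim_trans)
    moreover have "sim n (g c) x1" using all c labels_mset[OF ms] by auto
    ultimately show False using c by (metis sim_sym sim_trans)
  qed
  then show ?thesis using wf_mset[OF ms] wf rr s3(2) unfolding Inv_def colored_def
    by (metis sim_sym)
qed

lemma rot_bwd: assumes "Inv n (rotate1 xs)" shows "Inv n xs"
proof (cases xs)
  case Nil then show ?thesis using assms by simp
next
  case (Cons l w)
  have ms: "mset (rotate1 xs) = mset xs" using Cons by simp
  from assms obtain g x1 y c where wf: "gauss_wf (rotate1 xs)" and r: "run n g x1 (w @ [l]) = Some y" and s: "sim n y x1"
    and c: "c \<in> labels (rotate1 xs)" "\<not> sim n (g c) x1" using Cons by (auto elim: Inv_E)
  from r obtain m where s1: "run n g x1 w = Some m" and s2: "run n g m [l] = Some y"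
    using run_append_Some[of n g x1 w "[l]" y] by auto
  obtain m' where s3: "run n g y w = Some m'" "sim n m m'" using run_sim[OF s1 sim_sym[OF s]] by blast
  have rr: "run n g m xs = Some m'" using Cons s2 s3 run_append_Some[of n g m "[l]" w] by auto
  have nt: "\<exists>c\<in>labels xs. \<not> sim n (g c) m"
  proof (rule ccontr)
    assume "\<not> ?thesis"
    then have all: "\<forall>c\<in>labels xs. sim n (g c) m" by blast
    then have "\<forall>c\<in>labels [l]. sim n (g c) m" using Cons by simp
    from run_const[OF this sim_refl] s2 have "sim n y m" by auto
    then have "sim n x1 m" using s by (metis sim_sym sim_trans)
    moreover have "sim n (g c) m" using all c labels_mset[OF ms] by auto
    ultimately show False using c by (metis sim_sym sim_trans)
  qed
  then show ?thesis using wf_mset[OF ms] wf rr s3(2) unfolding Inv_def colored_def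
    by (metis sim_sym)
qed

lemma run_relabel: "run n g x (map (relabel f) w) = run n (g \<circ> f) x w"
proof (induction w arbitrary: x)
  case Nil then show ?case by simp
next
  case (Cons l w) then show ?case by (cases l) (auto simp: run_Over)
qed

lemma relabel_fwd: assumes f: "inj f" and "Inv n xs" shows "Inv n (map (relabel f) xs)"
proof -
  from assms(2) obtain g x y c where "gauss_wf xs" "run n g x xs = Some y" "sim n y x" "c \<in> labels xs" "\<not> sim n (g c) x"
    by (rule Inv_E)
  moreover have "(g \<circ> inv f) \<circ> f = g" using f by (simp add: fun_eq_iff)
  ultimately show ?thesis
    by (intro Inv_I[of _ n "g \<circ> inv f" x y "f c"]) (auto simp: wf_relabel[OF f] run_relabel labels_relabel f)
qed

lemma relabel_bwd: assumes f: "inj f" and "Inv n (map (relabel f) xs)" shows "Inv n xs"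
proof -
  from assms(2) obtain g x y c where "gauss_wf (map (relabel f) xs)" "run n g x (map (relabel f) xs) = Some y"
    "sim n y x" "c \<in> labels (map (relabel f) xs)" "\<not> sim n (g c) x"
    by (rule Inv_E)
  moreover then obtain c' where "c' \<in> labels xs" "c = f c'" by (auto simp: labels_relabel)
  ultimately show ?thesis
    by (intro Inv_I[of _ n "g \<circ> f" x y c']) (auto simp: wf_relabel[OF f] run_relabel)
qed

lemma simt: "sim n a b \<Longrightarrow> sim n b c \<Longrightarrow> sim n a c" by (rule sim_trans)

locale insctx =
  fixes n :: int and os us xs :: "letter list"
  assumes H1: "\<forall>l\<in>set os. \<exists>c e. l = Over c e"
  and H2: "labels us \<subseteq> labels os"
  and H3: "labels os \<inter> labels xs = {}"
  and H4: "\<And>g a y. \<forall>c\<in>labels us. sim n (g c) y \<Longrightarrow> \<exists>a'. run n g a us = Some a' \<and> sim n a a'"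
  and H5: "gauss_wf (os @ us)"
begin

lemma wf_eq: "mset ys = mset (xs @ (os @ us)) \<Longrightarrow> gauss_wf ys = gauss_wf xs"
proof -
  assume "mset ys = mset (xs @ (os @ us))"
  then have "gauss_wf ys = gauss_wf (xs @ (os @ us))" by (rule wf_mset)
  also have "\<dots> = (gauss_wf xs \<and> gauss_wf (os @ us))"
    using H2 H3 by (intro wf_app) auto
  finally show ?thesis using H5 by simp
qed

lemma A_fwd:
  assumes xs: "xs = u @ v @ w" and ys: "ys = u @ os @ v @ us @ w" and I: "Inv n xs"
  shows "Inv n ys"
proof -
  from I obtain g x0 y c where wf: "gauss_wf xs" and r: "run n g x0 xs = Some y" and s: "sim n y x0"
    and c: "c \<in> labels xs" "\<not> sim n (g c) x0" by (rule Inv_E)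
  from r obtain a b where ra: "run n g x0 u = Some a" and rb: "run n g a v = Some b" and ry: "run n g b w = Some y"
    unfolding xs run_append_Some by blast
  define g' where "g' = (\<lambda>d. if d \<in> labels os then a else g d)"
  have gu: "run n g' p q = run n g p q" if "labels q \<subseteq> labels xs" for p q
    using that H3 by (intro run_cong_g) (auto simp: g'_def)
  have gu': "run n g' p u = run n g p u" "run n g' p v = run n g p v" "run n g' p w = run n g p w" for p
    using gu[of u p] gu[of v p] gu[of w p] xs by auto
  have ro: "run n g' a os = Some a" using H1 by (intro run_overs2) (auto simp: g'_def)
  have "\<forall>c\<in>labels us. sim n (g' c) a" using H2 by (auto simp: g'_def)
  from H4[OF this, of b] obtain b' where rb': "run n g' b us = Some b'" "sim n b b'" by blast
  obtain y' where ry': "run n g b' w = Some y'" "sim n y y'" using run_sim[OF ry rb'(2)] by blast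
  have "run n g' x0 ys = Some y'"
    unfolding ys run_append using gu' ra rb ro rb' ry' xs by simp
  moreover have "sim n y' x0" using ry'(2) s by (metis sim_sym sim_trans)
  moreover have "gauss_wf ys" using wf wf_eq[of ys] xs ys by (simp add: ac_simps)
  moreover have "c \<in> labels ys" "g' c = g c" using c H3 xs ys by (auto simp: g'_def)
  ultimately show ?thesis using c by (intro Inv_I[of ys n g' x0 y' c]) auto
qed

lemma A_bwd:
  assumes xs: "xs = u @ v @ w" and ys: "ys = u @ os @ v @ us @ w" and I: "Inv n ys"
  shows "Inv n xs"
proof -
  from I obtain g x0 y c where wf: "gauss_wf ys" and r: "run n g x0 ys = Some y" and s: "sim n y x0"
    and c: "c \<in> labels ys" "\<not> sim n (g c) x0" by (rule Inv_E)
  from r obtain a a2 b b1 where ra: "run n g x0 u = Some a" and ro: "run n g a os = Some a2"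
    and rb: "run n g a2 v = Some b" and rb1: "run n g b us = Some b1" and ry: "run n g b1 w = Some y"
    unfolding ys run_append_Some by blast
  from run_overs[OF H1 ro] have a2: "a2 = a" and oa: "\<forall>d\<in>labels os. sim n a (g d)" by auto
  have "\<forall>d\<in>labels us. sim n (g d) a" using oa H2 by (auto intro: sim_sym)
  from H4[OF this, of b] rb1 have "sim n b b1" by auto
  obtain y' where ry': "run n g b w = Some y'" "sim n y y'" using run_sim[OF ry sim_sym[OF \<open>sim n b b1\<close>]] by blast
  have "run n g x0 xs = Some y'" unfolding xs run_append using ra rb a2 ry' by simp
  moreover have "sim n y' x0" using ry'(2) s by (metis sim_sym sim_trans)
  moreover have "gauss_wf xs" using wf wf_eq[of ys] xs ys by (simp add: ac_simps)
  moreover have "\<exists>c\<in>labels xs. \<not> sim n (g c) x0"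
  proof (rule ccontr)
    assume "\<not> ?thesis"
    then have all: "\<forall>d\<in>labels xs. sim n (g d) x0" by blast
    show False
    proof (cases "c \<in> labels xs")
      case True then show False using all c by blast
    next
      case False
      then have "c \<in> labels os" using c xs ys H2 by auto
      then have "sim n a (g c)" using oa by blast
      moreover have "sim n a x0" using run_const[of u n g x0 x0] all xs ra by auto
      ultimately show False using c(2) by (metis sim_sym sim_trans)
    qed
  qed
  ultimately show ?thesis unfolding Inv_def colored_def by blast
qed

lemma B_fwd:
  assumes xs: "xs = u @ v @ w" and ys: "ys = u @ us @ v @ os @ w" and I: "Inv n xs"
  shows "Inv n ys"
proof -
  from I obtain g x0 y c where wf: "gauss_wf xs" and r: "run n g x0 xs = Some y" and s: "sim n y x0"
    and c: "c \<in> labels xs" "\<not> sim n (g c) x0" by (rule Inv_E)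
  from r obtain a b where ra: "run n g x0 u = Some a" and rb: "run n g a v = Some b" and ry: "run n g b w = Some y"
    unfolding xs run_append_Some by blast
  define g' where "g' = (\<lambda>d. if d \<in> labels os then b else g d)"
  have gu: "run n g' p q = run n g p q" if "labels q \<subseteq> labels xs" for p q
    using that H3 by (intro run_cong_g) (auto simp: g'_def)
  have gu': "run n g' p u = run n g p u" "run n g' p v = run n g p v" "run n g' p w = run n g p w" for p
    using gu[of u p] gu[of v p] gu[of w p] xs by auto
  have "\<forall>c\<in>labels us. sim n (g' c) b" using H2 by (auto simp: g'_def)
  from H4[OF this, of a] obtain a' where ra': "run n g' a us = Some a'" "sim n a a'" by blast
  obtain b' where rb': "run n g a' v = Some b'" "sim n b b'" using run_sim[OF rb ra'(2)] by blast
  have ro: "run n g' b' os = Some b'" using H1 rb'(2) by (intro run_overs2) (auto simp: g'_def intro: sim_sym)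
  obtain y' where ry': "run n g b' w = Some y'" "sim n y y'" using run_sim[OF ry rb'(2)] by blast
  have "run n g' x0 ys = Some y'"
    unfolding ys run_append using gu' ra ra' rb' ro ry' xs by simp
  moreover have "sim n y' x0" using ry'(2) s by (metis sim_sym sim_trans)
  moreover have "gauss_wf ys" using wf wf_eq[of ys] xs ys by (simp add: ac_simps)
  moreover have "c \<in> labels ys" "g' c = g c" using c H3 xs ys by (auto simp: g'_def)
  ultimately show ?thesis using c by (intro Inv_I[of ys n g' x0 y' c]) auto
qed

lemma B_bwd:
  assumes xs: "xs = u @ v @ w" and ys: "ys = u @ us @ v @ os @ w" and I: "Inv n ys"
  shows "Inv n xs"
proof -
  from I obtain g x0 y c where wf: "gauss_wf ys" and r: "run n g x0 ys = Some y" and s: "sim n y x0"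
    and c: "c \<in> labels ys" "\<not> sim n (g c) x0" by (rule Inv_E)
  from r obtain a a1 b b2 where ra: "run n g x0 u = Some a" and ra1: "run n g a us = Some a1"
    and rb: "run n g a1 v = Some b" and ro: "run n g b os = Some b2" and ry: "run n g b2 w = Some y"
    unfolding ys run_append_Some by blast
  from run_overs[OF H1 ro] have b2: "b2 = b" and ob: "\<forall>d\<in>labels os. sim n b (g d)" by auto
  have "\<forall>d\<in>labels us. sim n (g d) b" using ob H2 by (auto intro: sim_sym)
  from H4[OF this, of a] ra1 have aa1: "sim n a a1" by auto
  obtain b' where rb': "run n g a v = Some b'" "sim n b b'" using run_sim[OF rb sim_sym[OF aa1]] by blast
  obtain y' where ry': "run n g b' w = Some y'" "sim n y y'" using run_sim[OF ry[unfolded b2] rb'(2)] by blast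
  have "run n g x0 xs = Some y'" unfolding xs run_append using ra rb' ry' by simp
  moreover have "sim n y' x0" using ry'(2) s by (metis sim_sym sim_trans)
  moreover have "gauss_wf xs" using wf wf_eq[of ys] xs ys by (simp add: ac_simps)
  moreover have "\<exists>c\<in>labels xs. \<not> sim n (g c) x0"
  proof (rule ccontr)
    assume "\<not> ?thesis"
    then have all: "\<forall>d\<in>labels xs. sim n (g d) x0" by blast
    show False
    proof (cases "c \<in> labels xs")
      case True then show False using all c by blast
    next
      case False
      then have "c \<in> labels os" using c xs ys H2 by auto
      then have "sim n b (g c)" using ob by blast
      moreover have "sim n a x0" using run_const[of u n g x0 x0] all xs ra by auto
      then have "sim n a1 x0" using aa1 by (metis sim_sym sim_trans)
      then have "sim n b x0" using run_const[of v n g x0 a1] all xs rb by auto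
      ultimately show False using c(2) by (metis sim_sym sim_trans)
    qed
  qed
  ultimately show ?thesis unfolding Inv_def colored_def by blast
qed

lemma ins_eq: assumes "ins2 xs os us ys" shows "Inv n xs = Inv n ys"
  using assms unfolding ins2_def using A_fwd A_bwd B_fwd B_bwd by metis

end

lemma ins2_sym: "ins2 xs a b ys = ins2 xs b a ys"
  unfolding ins2_def by blast

locale segctx =
  fixes n :: int and S :: "letter list" and c :: nat and xs :: "letter list"
  assumes P0: "labels S = {c}"
  and P1: "\<And>g a. g c = a \<Longrightarrow> run n g a S = Some a"
  and P2: "\<And>g a a'. run n g a S = Some a' \<Longrightarrow> sim n a a' \<and> sim n (g c) a"
  and P3: "gauss_wf S"
  and P4: "c \<notin> labels xs"
begin

lemma wf_eq: "mset ys = mset (xs @ S) \<Longrightarrow> gauss_wf ys = gauss_wf xs"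
proof -
  assume "mset ys = mset (xs @ S)"
  then have "gauss_wf ys = gauss_wf (xs @ S)" by (rule wf_mset)
  also have "\<dots> = (gauss_wf xs \<and> gauss_wf S)"
    using P0 P4 by (intro wf_app) auto
  finally show ?thesis using P3 by simp
qed

lemma fwd: assumes xs: "xs = u @ v" and ys: "ys = u @ S @ v" and I: "Inv n xs" shows "Inv n ys"
proof -
  from I obtain g x0 y c0 where wf: "gauss_wf xs" and r: "run n g x0 xs = Some y" and s: "sim n y x0"
    and c0: "c0 \<in> labels xs" "\<not> sim n (g c0) x0" by (rule Inv_E)
  from r obtain a where ra: "run n g x0 u = Some a" and ry: "run n g a v = Some y"
    unfolding xs run_append_Some by blast
  define g' where "g' = g(c := a)"
  have gu: "run n g' p u = run n g p u" "run n g' p v = run n g p v" for p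
    using P4 xs by (auto intro!: run_cong_g simp: g'_def)
  have "run n g' x0 ys = Some y" unfolding ys run_append using gu ra ry P1[of g' a] by (simp add: g'_def)
  moreover have "gauss_wf ys" using wf wf_eq[of ys] xs ys by (simp add: ac_simps)
  moreover have "c0 \<in> labels ys" "g' c0 = g c0" using c0 P4 xs ys by (auto simp: g'_def)
  ultimately show ?thesis using c0 s by (intro Inv_I[of ys n g' x0 y c0]) auto
qed

lemma bwd: assumes xs: "xs = u @ v" and ys: "ys = u @ S @ v" and I: "Inv n ys" shows "Inv n xs"
proof -
  from I obtain g x0 y c0 where wf: "gauss_wf ys" and r: "run n g x0 ys = Some y" and s: "sim n y x0"
    and c0: "c0 \<in> labels ys" "\<not> sim n (g c0) x0" by (rule Inv_E)
  from r obtain a a' where ra: "run n g x0 u = Some a" and rs: "run n g a S = Some a'" and ry: "run n g a' v = Some y"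
    unfolding ys run_append_Some by blast
  from P2[OF rs] have aa: "sim n a a'" "sim n (g c) a" by auto
  obtain y' where ry': "run n g a v = Some y'" "sim n y y'" using run_sim[OF ry sim_sym[OF aa(1)]] by blast
  have "run n g x0 xs = Some y'" unfolding xs run_append using ra ry' by simp
  moreover have "sim n y' x0" using ry'(2) s by (metis sim_sym sim_trans)
  moreover have "gauss_wf xs" using wf wf_eq[of ys] xs ys by (simp add: ac_simps)
  moreover have "\<exists>c\<in>labels xs. \<not> sim n (g c) x0"
  proof (rule ccontr)
    assume "\<not> ?thesis"
    then have all: "\<forall>d\<in>labels xs. sim n (g d) x0" by blast
    show False
    proof (cases "c0 \<in> labels xs")
      case True then show False using all c0 by blast
    next
      case False
      then have "c0 = c" using c0 xs ys P0 by auto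
      moreover have "sim n a x0" using run_const[of u n g x0 x0] all xs ra by auto
      ultimately show False using c0(2) aa(2) by (metis sim_sym sim_trans)
    qed
  qed
  ultimately show ?thesis unfolding Inv_def colored_def by blast
qed

end

lemma R1_eq: assumes "R1_step xs ys" shows "Inv n xs = Inv n ys"
proof -
  obtain u v c e where xs: "xs = u @ v" and c: "c \<notin> labels xs" and
    ys: "ys = u @ [Over c e, Under c e] @ v \<or> ys = u @ [Under c e, Over c e] @ v"
    using assms unfolding R1_step_def by blast
  have wf1: "gauss_wf [Over c e, Under c e]" "gauss_wf [Under c e, Over c e]"
    by (auto simp: gauss_wf_def labels_def)
  interpret s1: segctx n "[Over c e, Under c e]" c xs
  proof unfold_locales
    fix g a a' assume h: "run n g a [Over c e, Under c e] = Some a'"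
    then have 1: "sim n a (g c)" and 2: "a' = qop e a (g c)" by auto
    have "sim n (qop e a (g c)) (qop e a a)" by (rule qop_sim2[OF sim_sym[OF 1]])
    then have 3: "sim n a' a" using 2 by simp
    show "sim n a a' \<and> sim n (g c) a" using 1 3 by (metis sim_sym)
  qed (auto simp: c wf1 run_Over)
  interpret s2: segctx n "[Under c e, Over c e]" c xs
  proof unfold_locales
    fix g a a' assume h: "run n g a [Under c e, Over c e] = Some a'"
    then have 1: "sim n (qop e a (g c)) (g c)" and 2: "a' = qop e a (g c)" by (auto split: if_splits)
    have "sim n (qop (\<not> e) (qop e a (g c)) (g c)) (qop (\<not> e) (g c) (g c))" by (rule qop_sim1[OF 1])
    then have 3: "sim n a (g c)" by simp
    show "sim n a a' \<and> sim n (g c) a" using 1 2 3 by (metis sim_sym sim_trans)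
  qed (auto simp: c wf1 run_Over)
  show ?thesis using ys s1.fwd s1.bwd s2.fwd s2.bwd xs by metis
qed

lemma R2_eq: assumes "R2_step xs ys" shows "Inv n xs = Inv n ys"
proof -
  obtain c1 c2 e where c: "c1 \<noteq> c2" "c1 \<notin> labels xs" "c2 \<notin> labels xs" and
    ys: "ins2 xs [Over c1 e, Over c2 (\<not> e)] [Under c1 e, Under c2 (\<not> e)] ys \<or>
       ins2 xs [Over c1 e, Over c2 (\<not> e)] [Under c2 (\<not> e), Under c1 e] ys"
    using assms unfolding R2_step_def by blast
  have wf1: "gauss_wf ([Over c1 e, Over c2 (\<not> e)] @ [Under c1 e, Under c2 (\<not> e)])"
    "gauss_wf ([Over c1 e, Over c2 (\<not> e)] @ [Under c2 (\<not> e), Under c1 e])"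
    using c(1) by (auto simp: gauss_wf_def labels_def)
  interpret i1: insctx n "[Over c1 e, Over c2 (\<not> e)]" "[Under c1 e, Under c2 (\<not> e)]" xs
  proof unfold_locales
    fix g a y assume h: "\<forall>c\<in>labels [Under c1 e, Under c2 (\<not> e)]. sim n (g c) y"
    have 1: "sim n (qop e a (g c1)) (qop e a y)" using h by (intro qop_sim2) auto
    have 2: "sim n (qop (\<not> e) (qop e a (g c1)) (g c2)) (qop (\<not> e) (qop e a (g c1)) y)" using h by (intro qop_sim2) auto
    have 3: "sim n (qop (\<not> e) (qop e a (g c1)) y) (qop (\<not> e) (qop e a y) y)" using 1 by (rule qop_sim1)
    have "sim n a (qop (\<not> e) (qop e a (g c1)) (g c2))" using 2 3 by (metis sim_sym sim_trans qop_inv)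
    then show "\<exists>a'. run n g a [Under c1 e, Under c2 (\<not> e)] = Some a' \<and> sim n a a'" by simp
  qed (use c wf1 in auto)
  interpret i2: insctx n "[Over c1 e, Over c2 (\<not> e)]" "[Under c2 (\<not> e), Under c1 e]" xs
  proof unfold_locales
    fix g a y assume h: "\<forall>c\<in>labels [Under c2 (\<not> e), Under c1 e]. sim n (g c) y"
    have 1: "sim n (qop (\<not> e) a (g c2)) (qop (\<not> e) a y)" using h by (intro qop_sim2) auto
    have 2: "sim n (qop e (qop (\<not> e) a (g c2)) (g c1)) (qop e (qop (\<not> e) a (g c2)) y)" using h by (intro qop_sim2) auto
    have 3: "sim n (qop e (qop (\<not> e) a (g c2)) y) (qop e (qop (\<not> e) a y) y)" using 1 by (rule qop_sim1)
    have "sim n a (qop e (qop (\<not> e) a (g c2)) (g c1))" using 2 3 by (metis sim_sym sim_trans qop_inv')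
    then show "\<exists>a'. run n g a [Under c2 (\<not> e), Under c1 e] = Some a' \<and> sim n a a'" by simp
  qed (use c wf1 in auto)
  show ?thesis using ys i1.ins_eq i2.ins_eq by blast
qed

definition qk :: "int \<Rightarrow> int \<times> int \<Rightarrow> int \<times> int \<Rightarrow> int \<times> int" where
  "qk m a y = (fst a + m * om a y * fst y, snd a + m * om a y * snd y)"

lemma qop_qk: "qop e a y = qk (if e then 1 else -1) a y"
  by (cases e) (simp_all add: qop_def qk_def Let_def)

lemma qk_add: "qk m (qk m' a y) y = qk (m' + m) a y"
  by (simp add: qk_def om_def algebra_simps)

lemma qk_zero[simp]: "qk 0 a y = a" by (simp add: qk_def)

lemma qk_comp: "qk m (a1,a2) (b1,b2) = (a1 + m * (a1*b2 - a2*b1) * b1, a2 + m * (a1*b2 - a2*b1) * b2)"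
  by (simp add: qk_def om_def)

lemma qk_sim1: assumes "sim n a a'" shows "sim n (qk s a b) (qk s a' b)"
proof -
  obtain a1 a2 b1 b2 a1' a2' where P: "a = (a1,a2)" "b = (b1,b2)" "a' = (a1',a2')" by (metis surj_pair)
  from assms consider "[a1 = a1'] (mod n)" "[a2 = a2'] (mod n)" | "[a1 = - a1'] (mod n)" "[a2 = - a2'] (mod n)"
    unfolding sim_def P by auto
  then show ?thesis
  proof cases
    case 1
    then show ?thesis unfolding sim_def P qk_comp
      by (intro disjI1 conjI; simp; intro cong_add cong_mult cong_diff cong_refl; simp)
  next
    case 2
    have "- (a1' + s * (a1' * b2 - a2' * b1) * b1) = (-a1') + s * ((-a1') * b2 - (-a2') * b1) * b1"
         "- (a2' + s * (a1' * b2 - a2' * b1) * b2) = (-a2') + s * ((-a1') * b2 - (-a2') * b1) * b2"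
      by (simp_all add: algebra_simps)
    then show ?thesis using 2 unfolding sim_def P qk_comp
      by (intro disjI2 conjI; simp only: fst_conv snd_conv; intro cong_add cong_mult cong_diff cong_refl; simp)
  qed
qed

lemma qk_n: "sim n (qk (s * n) a y) a"
proof -
  have "[fst a + s * n * om a y * fst y = fst a] (mod n)"
    unfolding cong_def by (metis mod_mult_self2 mult.commute mult.left_commute)
  moreover have "[snd a + s * n * om a y * snd y = snd a] (mod n)"
    unfolding cong_def by (metis mod_mult_self2 mult.commute mult.left_commute)
  ultimately show ?thesis unfolding sim_def qk_def by simp
qed

lemma iter_run: "\<forall>c\<in>set cs. sim n (g c) y \<Longrightarrow>
  \<exists>a'. run n g a (map (\<lambda>c. Under c e) cs) = Some a' \<and> sim n a' (qk ((if e then 1 else -1) * int (length cs)) a y)"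
proof (induction cs arbitrary: a)
  case Nil then show ?case by simp
next
  case (Cons c cs)
  define s :: int where "s = (if e then 1 else -1)"
  obtain a' where r: "run n g (qop e a (g c)) (map (\<lambda>c. Under c e) cs) = Some a'"
    and s1: "sim n a' (qk (s * int (length cs)) (qop e a (g c)) y)"
    using Cons.IH[of "qop e a (g c)"] Cons.prems unfolding s_def by auto
  have "sim n (qop e a (g c)) (qop e a y)" using Cons.prems by (intro qop_sim2) auto
  then have "sim n (qk (s * int (length cs)) (qop e a (g c)) y) (qk (s * int (length cs)) (qk s a y) y)"
    unfolding s_def qop_qk[of e a y] by (rule qk_sim1)
  also have "qk (s * int (length cs)) (qk s a y) y = qk (s * int (length (c # cs))) a y"
    by (simp add: qk_add algebra_simps)
  finally have "sim n a' (qk (s * int (length (c # cs))) a y)" using s1 by (metis sim_trans)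
  then show ?case using r unfolding s_def by simp
qed

lemma labels_mapO: "labels (map (\<lambda>c. Over c e) cs) = set cs" by (auto simp: labels_def image_image)
lemma labels_mapU: "labels (map (\<lambda>c. Under c e) cs) = set cs" by (auto simp: labels_def image_image)

lemma wf_map: assumes "distinct cs" shows "gauss_wf (map (\<lambda>c. Over c e) cs @ map (\<lambda>c. Under c e) cs)"
proof -
  have f1: "filter (\<lambda>l. \<exists>e'. l = Over c e') (map (\<lambda>c. Over c e) cs) = map (\<lambda>c. Over c e) (filter (\<lambda>x. x = c) cs)" for c
    by (simp add: filter_map o_def eq_commute)
  have f2: "filter (\<lambda>l. \<exists>e'. l = Under c e') (map (\<lambda>c. Under c e) cs) = map (\<lambda>c. Under c e) (filter (\<lambda>x. x = c) cs)" for c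
    by (simp add: filter_map o_def eq_commute)
  have f3: "filter (\<lambda>l. \<exists>e'. l = Over c e') (map (\<lambda>c. Under c e) cs) = []" for c
    by (simp add: filter_map o_def)
  have f4: "filter (\<lambda>l. \<exists>e'. l = Under c e') (map (\<lambda>c. Over c e) cs) = []" for c
    by (simp add: filter_map o_def)
  have l1: "c \<in> set cs \<Longrightarrow> length (filter (\<lambda>x. x = c) cs) = 1" for c
  proof -
    assume "c \<in> set cs"
    then have "{x. x = c} \<inter> set cs = {c}" by auto
    then show ?thesis using distinct_length_filter[OF assms, of "\<lambda>x. x = c"] by simp
  qed
  show ?thesis unfolding gauss_wf_def labels_simps labels_mapO labels_mapU
    using l1 by (auto simp: f1 f2 f3 f4)
qed

lemma Vn_eq: assumes "Vn_move n xs ys" shows "Inv (int n) xs = Inv (int n) ys"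
proof -
  obtain cs e where cs: "length cs = n" "distinct cs" "set cs \<inter> labels xs = {}"
    and ins: "ins2 xs (map (\<lambda>c. Under c e) cs) (map (\<lambda>c. Over c e) cs) ys"
    using assms unfolding Vn_move_def by blast
  interpret i: insctx "int n" "map (\<lambda>c. Over c e) cs" "map (\<lambda>c. Under c e) cs" xs
  proof unfold_locales
    fix g a y assume h: "\<forall>c\<in>labels (map (\<lambda>c. Under c e) cs). sim (int n) (g c) y"
    then obtain a' where "run (int n) g a (map (\<lambda>c. Under c e) cs) = Some a'"
      "sim (int n) a' (qk ((if e then 1 else -1) * int n) a y)"
      using iter_run[of cs "int n" g y a e] cs(1) by (auto simp: labels_mapU)
    moreover have "sim (int n) (qk ((if e then 1 else -1) * int n) a y) a" by (rule qk_n)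
    ultimately show "\<exists>a'. run (int n) g a (map (\<lambda>c. Under c e) cs) = Some a' \<and> sim (int n) a a'"
      by (metis sim_sym sim_trans)
  qed (use cs wf_map[OF cs(2)] in \<open>auto simp: labels_mapO labels_mapU\<close>)
  show ?thesis using ins ins2_sym i.ins_eq by metis
qed

definition rep :: "int \<Rightarrow> (nat \<Rightarrow> int \<times> int) \<Rightarrow> (nat \<Rightarrow> int \<times> int) \<Rightarrow> letter list \<Rightarrow> letter list \<Rightarrow> bool" where
  "rep n g g' s s' \<longleftrightarrow> (\<forall>a a' d. run n g a s = Some d \<longrightarrow> sim n a a' \<longrightarrow> (\<exists>d'. run n g' a' s' = Some d' \<and> sim n d d'))"

lemma rep_app: assumes "rep n g g' s s'" "rep n g g' t t'" shows "rep n g g' (s @ t) (s' @ t')"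
  unfolding rep_def
proof (intro allI impI)
  fix a a' d assume h: "run n g a (s @ t) = Some d" "sim n a a'"
  then obtain m where m: "run n g a s = Some m" "run n g m t = Some d" unfolding run_append_Some by blast
  from assms(1) m(1) h(2) obtain m' where m': "run n g' a' s' = Some m'" "sim n m m'" unfolding rep_def by blast
  from assms(2) m(2) m'(2) obtain d' where "run n g' m' t' = Some d'" "sim n d d'" unfolding rep_def by blast
  then show "\<exists>d'. run n g' a' (s' @ t') = Some d' \<and> sim n d d'" using m' unfolding run_append_Some by blast
qed

lemma rep_same: assumes "\<forall>c\<in>labels s. g c = g' c" shows "rep n g g' s s"
  unfolding rep_def using run_cong_g[OF assms] run_sim by metis

lemma rep_good: assumes "\<And>a d. run n g a s = Some d \<Longrightarrow> \<exists>d'. run n g' a s' = Some d' \<and> sim n d d'"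
  shows "rep n g g' s s'"
  unfolding rep_def
proof (intro allI impI)
  fix a a' d assume h: "run n g a s = Some d" "sim n a a'"
  from assms[OF h(1)] obtain d' where d': "run n g' a s' = Some d'" "sim n d d'" by blast
  from run_sim[OF d'(1) h(2)] obtain d'' where "run n g' a' s' = Some d''" "sim n d' d''" by blast
  then show "\<exists>d'. run n g' a' s' = Some d' \<and> sim n d d'" using d'(2) by (metis sim_trans)
qed

lemma R3_sym: assumes "R3_step xs ys" shows "R3_step ys xs"
proof -
  from assms obtain x y z ex ey ez t m b u v w r p1 p2 p3 where
    d: "x \<noteq> y" "x \<noteq> z" "y \<noteq> z" and cs: "(t = m) = (ey = ez)" "(t = b) = (ex = ez)" and
    P: "{#p1, p2, p3#} = {#(if t then [Over x ex, Over y ey] else [Over y ey, Over x ex]),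
                          (if m then [Under x ex, Over z ez] else [Over z ez, Under x ex]),
                          (if b then [Under y ey, Under z ez] else [Under z ez, Under y ey])#}" and
    xs: "xs = u @ p1 @ v @ p2 @ w @ p3 @ r" and ys: "ys = u @ rev p1 @ v @ rev p2 @ w @ rev p3 @ r"
    unfolding R3_step_def Let_def by (elim exE conjE) (rule that, assumption+)
  have "{#rev p1, rev p2, rev p3#} = image_mset rev {#p1, p2, p3#}" by simp
  also have "\<dots> = {#(if \<not>t then [Over x ex, Over y ey] else [Over y ey, Over x ex]),
                          (if \<not>m then [Under x ex, Over z ez] else [Over z ez, Under x ex]),
                          (if \<not>b then [Under y ey, Under z ez] else [Under z ez, Under y ey])#}"
    unfolding P by (cases t; cases m; cases b) simp_all
  finally have P': "{#rev p1, rev p2, rev p3#} = \<dots>" .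
  have cs': "((\<not>t) = (\<not>m)) = (ey = ez)" "((\<not>t) = (\<not>b)) = (ex = ez)" using cs by auto
  show ?thesis unfolding R3_step_def Let_def
    apply (rule exI[of _ x], rule exI[of _ y], rule exI[of _ z], rule exI[of _ ex], rule exI[of _ ey], rule exI[of _ ez])
    apply (rule exI[of _ "\<not>t"], rule exI[of _ "\<not>m"], rule exI[of _ "\<not>b"])
    apply (intro conjI)
    using d cs' apply simp_all[5]
    apply (rule exI[of _ u], rule exI[of _ v], rule exI[of _ w], rule exI[of _ r])
    apply (rule exI[of _ "rev p1"], rule exI[of _ "rev p2"], rule exI[of _ "rev p3"])
    apply (intro conjI)
      apply (rule P')
    using xs ys by simp_all
qed


lemma sum3: assumes "{#p1, p2, p3#} = {#T, M, B#}" shows "f p1 + f p2 + f p3 = (f T + f M + f B :: nat)"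
proof -
  have "sum_mset (image_mset f {#p1, p2, p3#}) = sum_mset (image_mset f {#T, M, B#})" using assms by simp
  then show ?thesis by (simp add: ac_simps)
qed

lemma cnt_zero: "length (filter P q) = 0 \<Longrightarrow> l \<in> set q \<Longrightarrow> \<not> P l"
  by (metis filter_empty_conv length_0_conv)

lemma notin_labels: assumes "length (filter (\<lambda>l. \<exists>e. l = Over z e) q) = 0"
  "length (filter (\<lambda>l. \<exists>e. l = Under z e) q) = 0" shows "z \<notin> labels q"
proof
  assume "z \<in> labels q"
  then obtain l where l: "l \<in> set q" "lbl l = z" by (auto simp: labels_def)
  show False
  proof (cases l)
    case (Over c e) then show False using cnt_zero[OF assms(1) l(1)] l by auto
  next
    case (Under c e) then show False using cnt_zero[OF assms(2) l(1)] l by auto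
  qed
qed

lemma R3_core:
  fixes x y z :: nat and ex ey ez t m b :: bool
  assumes d: "x \<noteq> y" "x \<noteq> z" "y \<noteq> z" and cs: "(t = m) = (ey = ez)" "(t = b) = (ex = ez)"
  and T: "T = (if t then [Over x ex, Over y ey] else [Over y ey, Over x ex])"
  and M: "M = (if m then [Under x ex, Over z ez] else [Over z ez, Under x ex])"
  and B: "B = (if b then [Under y ey, Under z ez] else [Under z ez, Under y ey])"
  and P: "{#p1, p2, p3#} = {#T, M, B#}"
  and xs: "xs = u @ p1 @ v @ p2 @ w @ p3 @ r" and ys: "ys = u @ rev p1 @ v @ rev p2 @ w @ rev p3 @ r"
  and I: "Inv n xs"
  shows "Inv n ys"
proof -
  from I obtain g x0 yf c0 where wf: "gauss_wf xs" and rx: "run n g x0 xs = Some yf" and s: "sim n yf x0"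
    and c0: "c0 \<in> labels xs" "\<not> sim n (g c0) x0" by (rule Inv_E)
  have ms: "mset ys = mset xs" unfolding xs ys by simp
  have lab: "labels ys = labels xs" by (rule labels_mset[OF ms])
  have wfy: "gauss_wf ys" using wf wf_mset[OF ms] by simp
  have mem: "T \<in> {p1, p2, p3}" "M \<in> {p1, p2, p3}" "B \<in> {p1, p2, p3}"
    using P by (metis add_mset_commute insert_iff insert_DiffM2 union_single_eq_member set_mset_add_mset_insert set_mset_empty)+
  have lpT: "labels T = {x, y}" and lpM: "labels M = {x, z}" and lpB: "labels B = {y, z}"
    unfolding T M B by auto
  have labxs: "labels xs = labels u \<union> labels p1 \<union> labels v \<union> labels p2 \<union> labels w \<union> labels p3 \<union> labels r"
    unfolding xs by auto
  have xin: "x \<in> labels xs" and zin: "z \<in> labels xs"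
    using mem(1,2) lpT lpM unfolding labxs by auto
  define cO where "cO q = length (filter (\<lambda>l. \<exists>e. l = Over z e) q)" for q
  define cU where "cU q = length (filter (\<lambda>l. \<exists>e. l = Under z e) q)" for q
  have "cO xs = 1" "cU xs = 1" using wf zin unfolding gauss_wf_def cO_def cU_def by auto
  moreover have "cO xs = cO u + (cO p1 + cO p2 + cO p3) + cO v + cO w + cO r"
    "cU xs = cU u + (cU p1 + cU p2 + cU p3) + cU v + cU w + cU r"
    unfolding xs cO_def cU_def by simp_all
  moreover have "cO p1 + cO p2 + cO p3 = cO T + cO M + cO B" "cU p1 + cU p2 + cU p3 = cU T + cU M + cU B"
    using P by (rule sum3)+
  moreover have "cO T = 0" "cO M = 1" "cO B = 0" "cU T = 0" "cU M = 0" "cU B = 1"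
    unfolding cO_def cU_def T M B using d by auto
  ultimately have "cO u = 0" "cO v = 0" "cO w = 0" "cO r = 0" "cU u = 0" "cU v = 0" "cU w = 0" "cU r = 0"
    by linarith+
  then have zn: "z \<notin> labels u" "z \<notin> labels v" "z \<notin> labels w" "z \<notin> labels r"
    unfolding cO_def cU_def using notin_labels by blast+
  from rx obtain a1 a2 a3 a4 a5 a6 where ru: "run n g x0 u = Some a1" and r1: "run n g a1 p1 = Some a2"
    and rv: "run n g a2 v = Some a3" and r2: "run n g a3 p2 = Some a4" and rw: "run n g a4 w = Some a5"
    and r3: "run n g a5 p3 = Some a6" and rr: "run n g a6 r = Some yf"
    unfolding xs run_append_Some by blast
  have "\<exists>a d. run n g a T = Some d" using mem(1) r1 r2 r3 by blast
  then obtain aT dT where rT: "run n g aT T = Some dT" by blast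
  then have "sim n aT (g x) \<and> sim n aT (g y)" unfolding T by (cases t) auto
  then have sxy: "sim n (g x) (g y)" by (metis sim_sym sim_trans)
  have key: "(ey = ex) = (m = b)" using cs by auto
  define gz' where "gz' = (if m then qop (\<not>ex) (g z) (g x) else qop ex (g z) (g x))"
  define g' where "g' = g(z := gz')"
  have g'x[simp]: "g' x = g x" and g'y[simp]: "g' y = g y" and g'z[simp]: "g' z = gz'"
    using d by (auto simp: g'_def)
  have goodT: "run n g a T = Some dd \<Longrightarrow> \<exists>d'. run n g' a (rev T) = Some d' \<and> sim n dd d'" for a dd
    unfolding T by (cases t) auto
  have goodM: "run n g a M = Some dd \<Longrightarrow> \<exists>d'. run n g' a (rev M) = Some d' \<and> sim n dd d'" for a dd
  proof (cases m)
    case True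
    assume h: "run n g a M = Some dd"
    then have 1: "sim n (qop ex a (g x)) (g z)" and 2: "dd = qop ex a (g x)" using True unfolding M by auto
    have "sim n (qop (\<not>ex) (qop ex a (g x)) (g x)) (qop (\<not>ex) (g z) (g x))" by (rule qop_sim1[OF 1])
    then have "sim n a gz'" using True unfolding gz'_def by simp
    then show ?thesis using True 2 unfolding M by simp
  next
    case False
    assume h: "run n g a M = Some dd"
    then have 1: "sim n a (g z)" and 2: "dd = qop ex a (g x)" using False unfolding M by auto
    have "sim n (qop ex a (g x)) (qop ex (g z) (g x))" by (rule qop_sim1[OF 1])
    then show ?thesis using False 2 unfolding M by (simp add: gz'_def)
  qed
  have Gs: "sim n gz' (if m then qop (\<not>ex) (g z) (g y) else qop ex (g z) (g y))"
    unfolding gz'_def using sxy by (cases m) (auto intro: qop_sim2)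
  have goodB: "run n g a B = Some dd \<Longrightarrow> \<exists>d'. run n g' a (rev B) = Some d' \<and> sim n dd d'" for a dd
  proof (cases b)
    case True
    assume h: "run n g a B = Some dd"
    then have 2: "dd = qop ez (qop ey a (g y)) (g z)" using True unfolding B by auto
    have e: "qop ey a' (g y) = a" if "a' = (if m then qop (\<not>ex) a (g y) else qop ex a (g y))" for a a'
      using that key True by (cases m; cases ey; cases ex) (auto simp: qop_inv[of True, simplified] qop_inv[of False, simplified])
    have "sim n (qop ey gz' (g y)) (qop ey (if m then qop (\<not>ex) (g z) (g y) else qop ex (g z) (g y)) (g y))"
      by (rule qop_sim1[OF Gs])
    then have 3: "sim n (qop ey gz' (g y)) (g z)" using e by simp
    have "qop ey (qop ez a gz') (g y) = qop ez (qop ey a (g y)) (qop ey gz' (g y))" by (rule qop_dist)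
    moreover have "sim n (qop ez (qop ey a (g y)) (qop ey gz' (g y))) dd" unfolding 2 by (rule qop_sim2[OF 3])
    ultimately show ?thesis using True unfolding B by (simp add: sim_sym)
  next
    case False
    assume h: "run n g a B = Some dd"
    then have 2: "dd = qop ey (qop ez a (g z)) (g y)" using False unfolding B by auto
    have e: "qop ey a (g y) = a'" if "a' = (if m then qop (\<not>ex) a (g y) else qop ex a (g y))" for a a'
      using that key False by (cases m; cases ey; cases ex) (auto simp: qop_inv[of True, simplified] qop_inv[of False, simplified])
    have 3: "sim n (qop ey (g z) (g y)) gz'" using Gs e[OF refl] by (metis sim_sym)
    have "dd = qop ez (qop ey a (g y)) (qop ey (g z) (g y))" unfolding 2 by (rule qop_dist)
    moreover have "sim n (qop ez (qop ey a (g y)) (qop ey (g z) (g y))) (qop ez (qop ey a (g y)) gz')"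
      by (rule qop_sim2[OF 3])
    ultimately show ?thesis using False unfolding B by simp
  qed
  have good: "q \<in> {p1, p2, p3} \<Longrightarrow> rep n g g' q (rev q)" for q
  proof -
    assume "q \<in> {p1, p2, p3}"
    then have "q \<in> {T, M, B}" using P by (metis insert_iff set_mset_add_mset_insert set_mset_empty)
    then show ?thesis using goodT goodM goodB by (auto intro!: rep_good)
  qed
  have same: "rep n g g' q q" if "z \<notin> labels q" for q
    using that by (intro rep_same) (auto simp: g'_def)
  have "rep n g g' xs ys" unfolding xs ys
    by (intro rep_app good same zn) auto
  then obtain yf' where ry: "run n g' x0 ys = Some yf'" "sim n yf yf'" using rx sim_refl[of n x0] unfolding rep_def by blast
  have "\<exists>c\<in>labels ys. \<not> sim n (g' c) x0"
  proof (cases "c0 = z")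
    case False then show ?thesis using c0 lab by (auto simp: g'_def)
  next
    case True
    show ?thesis
    proof (rule ccontr)
      assume "\<not> ?thesis"
      then have all: "\<forall>c\<in>labels ys. sim n (g' c) x0" by blast
      then have 1: "sim n (g x) x0" "sim n gz' x0" using xin zin lab by force+
      have "g z = (if m then qop ex gz' (g x) else qop (\<not>ex) gz' (g x))" unfolding gz'_def by simp
      moreover have "sim n (qop e gz' (g x)) x0" for e
      proof -
        have "sim n (qop e gz' (g x)) (qop e x0 (g x))" by (rule qop_sim1[OF 1(2)])
        moreover have "sim n (qop e x0 (g x)) (qop e x0 x0)" by (rule qop_sim2[OF 1(1)])
        ultimately show ?thesis by (metis sim_trans qop_idem)
      qed
      ultimately have "sim n (g z) x0" by simp
      then show False using c0 True by simp
    qed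
  qed
  then show ?thesis unfolding Inv_def colored_def using wfy ry s by (metis sim_sym sim_trans)
qed

lemma R3_fwd: assumes "R3_step xs ys" "Inv n xs" shows "Inv n ys"
proof -
  from assms(1) obtain x y z ex ey ez t m b u v w r p1 p2 p3 where
    d: "x \<noteq> y" "x \<noteq> z" "y \<noteq> z" and cs: "(t = m) = (ey = ez)" "(t = b) = (ex = ez)" and
    P: "{#p1, p2, p3#} = {#(if t then [Over x ex, Over y ey] else [Over y ey, Over x ex]),
                          (if m then [Under x ex, Over z ez] else [Over z ez, Under x ex]),
                          (if b then [Under y ey, Under z ez] else [Under z ez, Under y ey])#}" and
    xs: "xs = u @ p1 @ v @ p2 @ w @ p3 @ r" and ys: "ys = u @ rev p1 @ v @ rev p2 @ w @ rev p3 @ r"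
    unfolding R3_step_def Let_def by (elim exE conjE) (rule that, assumption+)
  show ?thesis by (rule R3_core[OF d cs refl refl refl P xs ys assms(2)])
qed

lemma welded_eq: assumes "welded_step xs ys" shows "Inv n xs = Inv n ys"
  using assms unfolding welded_step_def
proof (elim disjE)
  assume "rot_step xs ys" then show ?thesis using rot_fwd rot_bwd unfolding rot_step_def by blast
next
  assume "relabel_step xs ys" then show ?thesis using relabel_fwd relabel_bwd unfolding relabel_step_def by blast
next
  assume "R1_step xs ys" then show ?thesis by (rule R1_eq)
next
  assume "R2_step xs ys" then show ?thesis by (rule R2_eq)
next
  assume "R3_step xs ys" then show ?thesis using R3_fwd R3_sym by blast
next
  assume "OC_step xs ys" then show ?thesis using OC_fwd OC_sym by blast
qed

lemma step_eq: assumes "welded_step xs ys \<or> Vn_move n xs ys" shows "Inv (int n) xs = Inv (int n) ys"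
  using assms welded_eq Vn_eq by blast

lemma equiv_Inv: assumes "equiv_under (Vn_move n) a b" "Inv (int n) a" shows "Inv (int n) b"
  using assms(1) unfolding equiv_under_def
proof (induction rule: rtranclp_induct)
  case base then show ?case using assms(2) by simp
next
  case (step y z)
  from step.hyps(2) have "Inv (int n) y = Inv (int n) z"
    unfolding symclp_def using step_eq by metis
  then show ?case using step.IH by simp
qed

lemma trefoil_wf: "gauss_wf trefoil"
  by (simp add: gauss_wf_def trefoil_def labels_def ex_bool_eq)

lemma trefoil_Inv: assumes "n \<ge> 2" shows "Inv (int n) trefoil"
proof -
  define g :: "nat \<Rightarrow> int \<times> int" where "g c = (if c = 1 then (1,0) else if c = 2 then (0,1) else (1,1))" for c
  have r: "run (int n) g (1,0) trefoil = Some (-1, 0)"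
    by (simp add: trefoil_def g_def run_Over qop_def om_def Let_def)
  have s: "sim (int n) (-1, 0) (1, 0)" by (simp add: sim_def)
  have n1: "\<not> [0 = 1] (mod int n)" "\<not> [0 = - 1] (mod int n)"
    using assms by (auto simp: cong_def)
  have ns: "\<not> sim (int n) (g 2) (1, 0)" using n1 by (simp add: sim_def g_def)
  have "2 \<in> labels trefoil" by (simp add: trefoil_def labels_def)
  then show ?thesis using Inv_I[OF trefoil_wf r s _ ns] by blast
qed

lemma unknot_not_Inv: "\<not> Inv n unknot"
  by (simp add: Inv_def unknot_def)

theorem proposition5p2:
  fixes n :: nat
  assumes "n \<ge> 2"
  shows "\<not> is_unknotting_operation (Vn_move n) \<and> \<not> Vn_equivalent n trefoil unknot"
proof -
  have ne: "\<not> Vn_equivalent n trefoil unknot"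
    unfolding Vn_equivalent_def using equiv_Inv trefoil_Inv[OF assms] unknot_not_Inv by blast
  moreover have "\<not> is_unknotting_operation (Vn_move n)"
    using ne trefoil_wf unfolding is_unknotting_operation_def Vn_equivalent_def by blast
  ultimately show ?thesis by blast
qed

end
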